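(* Let $a\in\mathbb{R}$, $\epsilon>0$, $m\ge1$, and let $a_j,b_j\in\mathbb{C}$ with $\Re(b_j)>a$, $j=1,\dots,m$. Let $f$ be a smooth compactly supported function on $\mathbb{R}$ with support in $[\epsilon,\infty)$, and define $$I(t)=\int_\epsilon^\infty\mathrm{d}w\,f(w)\int_{\Gamma_a}\mathrm{d}z\,\mathrm{e}^{\frac12z^2t}\mathrm{e}^{zw}\prod_{j=1}^m\frac{z+a_j}{z-b_j}.$$ Then there is a constant $c$ (independent of $t$ and of the $a_j,b_j$) such that, uniformly in $0<t\le1$, $$|I(t)|\le c\prod_{j=1}^m(1+|a_j|+|b_j|),\qquad\text{and}\qquad\lim_{t\to0}I(t)=0.$$
   Context: $\Gamma_a=\{a+\mathrm{i}\varphi:\varphi\in\mathbb{R}\}$, upward oriented, with the integral including the factor $1/(2\pi\mathrm{i})$. *)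

theory Defs
  imports "HOL-Analysis.Analysis"
begin

definition smooth_real :: "(real \<Rightarrow> real) \<Rightarrow> bool" where
  "smooth_real f \<longleftrightarrow> (\<forall>k. ((deriv ^^ k) f) differentiable_on UNIV)"

definition supp_real :: "(real \<Rightarrow> real) \<Rightarrow> real set" where
  "supp_real f = closure {x. f x \<noteq> 0}"

text \<open>Integral over the upward oriented vertical line Gamma_a = {a + i phi},
  including the factor 1/(2 pi i); parametrised z = a + i phi, dz = i dphi.\<close>
definition Gamma_integral :: "real \<Rightarrow> (complex \<Rightarrow> complex) \<Rightarrow> complex" where
  "Gamma_integral a g = (1 / (2 * of_real pi * \<i>)) * (LBINT \<phi>. g (Complex a \<phi>) * \<i>)"

definition I_fun :: "(real \<Rightarrow> real) \<Rightarrow> real \<Rightarrow> real \<Rightarrow> nat \<Rightarrow> (nat \<Rightarrow> complex)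
    \<Rightarrow> (nat \<Rightarrow> complex) \<Rightarrow> real \<Rightarrow> complex" where
  "I_fun f \<epsilon> a m aa bb t =
     (LBINT w:{\<epsilon>..}. of_real (f w) *
        Gamma_integral a (\<lambda>z. exp (z\<^sup>2 * of_real t / 2) * exp (z * of_real w) *
            (\<Prod>j=1..m. (z + aa j) / (z - bb j))))"

end

theory Submission
  imports Defs "HOL-Complex_Analysis.Complex_Analysis" "HOL-Probability.Distributions"
begin

lemma contour_shift:
  fixes h :: "complex \<Rightarrow> complex" and a c \<delta> Tz :: real and B :: "real \<Rightarrow> real"
  assumes ca: "c < a" and a\<delta>: "a < \<delta>" and hol: "h holomorphic_on {z. Re z < \<delta>}"
    and ia: "integrable lborel (\<lambda>\<phi>. h (Complex a \<phi>))"
    and ic: "integrable lborel (\<lambda>\<phi>. h (Complex c \<phi>))"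
    and B0: "(B \<longlongrightarrow> 0) at_top"
    and Bb: "\<And>T x. T \<ge> Tz \<Longrightarrow> c \<le> x \<Longrightarrow> x \<le> a \<Longrightarrow>
               norm (h (Complex x T)) \<le> B T \<and> norm (h (Complex x (-T))) \<le> B T"
  shows "(LBINT \<phi>. h (Complex a \<phi>)) = (LBINT \<phi>. h (Complex c \<phi>))"
proof -
  define S where "S = {z. Re z < \<delta>}"
  have cvx: "convex S" unfolding S_def by (rule convex_halfspace_Re_lt)
  have contS: "continuous_on S h" using hol unfolding S_def
    by (rule holomorphic_on_imp_continuous_on)
  define Ia where "Ia T = (LINT \<phi>:{-T..T}|lborel. h (Complex a \<phi>))" for T
  define Ic where "Ic T = (LINT \<phi>:{-T..T}|lborel. h (Complex c \<phi>))" for T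
  have seg: "\<And>p q. p \<in> S \<Longrightarrow> q \<in> S \<Longrightarrow> (h has_contour_integral contour_integral (linepath p q) h) (linepath p q)"
  proof -
    fix p q assume "p \<in> S" "q \<in> S"
    then have "closed_segment p q \<subseteq> S" using closed_segment_subset cvx by blast
    then have "continuous_on (closed_segment p q) h" using contS continuous_on_subset by blast
    then show "(h has_contour_integral contour_integral (linepath p q) h) (linepath p q)"
      by (intro has_contour_integral_integral contour_integrable_continuous_linepath)
  qed
  have vert: "(LINT \<phi>:{-T..T}|lborel. h (Complex s \<phi>)) = -\<i> * contour_integral (linepath (Complex s (-T)) (Complex s T)) h"
    if "T > 0" "s < \<delta>" "integrable lborel (\<lambda>\<phi>. h (Complex s \<phi>))" for T s
  proof -
    have si: "set_integrable lborel {-T..T} (\<lambda>\<phi>. h (Complex s \<phi>))"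
      unfolding set_integrable_def using that(3) by (intro integrable_mult_indicator) auto
    have "((\<lambda>x. h (Complex s x)) has_integral (-\<i> * contour_integral (linepath (Complex s (-T)) (Complex s T)) h)) {-T..T}"
    proof -
      have "(h has_contour_integral contour_integral (linepath (Complex s (-T)) (Complex s T)) h) (linepath (Complex s (-T)) (Complex s T))"
        using seg[of "Complex s (-T)" "Complex s T"] that by (auto simp: S_def)
      then show ?thesis
        by (subst (asm) has_contour_integral_linepath_same_Re_iff[where c=s and a="-T" and b=T]) (use that in auto)
    qed
    then show ?thesis using set_borel_integral_eq_integral(2)[OF si] by (simp add: integral_unique)
  qed
  have key: "norm (Ia T - Ic T) \<le> 2 * (a - c) * B T" if T: "T \<ge> Tz" "T > 0" for T
  proof -
    define p1 where "p1 = Complex c (-T)"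
    define p2 where "p2 = Complex a (-T)"
    define p3 where "p3 = Complex a T"
    define p4 where "p4 = Complex c T"
    have inS: "p1 \<in> S" "p2 \<in> S" "p3 \<in> S" "p4 \<in> S"
      using ca a\<delta> by (auto simp: S_def p1_def p2_def p3_def p4_def)
    define J12 where "J12 = contour_integral (linepath p1 p2) h"
    define J23 where "J23 = contour_integral (linepath p2 p3) h"
    define J34 where "J34 = contour_integral (linepath p3 p4) h"
    define J14 where "J14 = contour_integral (linepath p1 p4) h"
    have h12: "(h has_contour_integral J12) (linepath p1 p2)" unfolding J12_def using seg inS by auto
    have h23: "(h has_contour_integral J23) (linepath p2 p3)" unfolding J23_def using seg inS by auto
    have h34: "(h has_contour_integral J34) (linepath p3 p4)" unfolding J34_def using seg inS by auto
    have h14: "(h has_contour_integral J14) (linepath p1 p4)" unfolding J14_def using seg inS by auto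
    have h41: "(h has_contour_integral (-J14)) (linepath p4 p1)"
      using has_contour_integral_reversepath[OF valid_path_linepath h14] by simp
    have "(h has_contour_integral (J12 + (J23 + (J34 + -J14))))
           (linepath p1 p2 +++ (linepath p2 p3 +++ (linepath p3 p4 +++ linepath p4 p1)))"
      by (intro has_contour_integral_join h12 h23 h34 h41 valid_path_join valid_path_linepath)
         (auto)
    moreover have "(h has_contour_integral 0)
           (linepath p1 p2 +++ (linepath p2 p3 +++ (linepath p3 p4 +++ linepath p4 p1)))"
    proof (rule Cauchy_theorem_convex_simple[OF _ cvx])
      show "h holomorphic_on S" using hol by (simp add: S_def)
      show "valid_path (linepath p1 p2 +++ (linepath p2 p3 +++ (linepath p3 p4 +++ linepath p4 p1)))"
        by (auto intro!: valid_path_join)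
      show "path_image (linepath p1 p2 +++ (linepath p2 p3 +++ (linepath p3 p4 +++ linepath p4 p1))) \<subseteq> S"
        using inS closed_segment_subset[OF _ _ cvx]
        by (auto simp: path_image_join)
      show "pathfinish (linepath p1 p2 +++ (linepath p2 p3 +++ (linepath p3 p4 +++ linepath p4 p1))) =
            pathstart (linepath p1 p2 +++ (linepath p2 p3 +++ (linepath p3 p4 +++ linepath p4 p1)))"
        by simp
    qed
    ultimately have sum0: "J12 + (J23 + (J34 + -J14)) = 0" by (rule has_contour_integral_unique)
    have IaJ: "Ia T = -\<i> * J23" unfolding Ia_def J23_def p2_def p3_def
      using vert[of T a] T a\<delta> ia by simp
    have IcJ: "Ic T = -\<i> * J14" unfolding Ic_def J14_def p1_def p4_def
      using vert[of T c] T ca a\<delta> ic by simp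
    have B0': "B T \<ge> 0" using Bb[of T c] T ca by (meson norm_ge_zero order_trans order.refl less_imp_le)
    have n12: "norm J12 \<le> B T * norm (p2 - p1)"
    proof (rule has_contour_integral_bound_linepath[OF h12 B0'])
      fix x assume "x \<in> closed_segment p1 p2"
      then obtain u where u: "0 \<le> u" "u \<le> 1" "x = (1 - u) *\<^sub>R p1 + u *\<^sub>R p2"
        unfolding closed_segment_def by auto
      have "x = Complex ((1-u)*c + u*a) (-T)" using u by (simp add: p1_def p2_def complex_eq_iff algebra_simps)
      moreover have "c \<le> (1-u)*c + u*a" "(1-u)*c + u*a \<le> a" using u ca
        using mult_nonneg_nonneg[of "a-c" u] mult_nonneg_nonneg[of "a-c" "1-u"] by (auto simp: algebra_simps)
      ultimately show "norm (h x) \<le> B T" using Bb[OF T(1)] by auto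
    qed
    have n34: "norm J34 \<le> B T * norm (p4 - p3)"
    proof (rule has_contour_integral_bound_linepath[OF h34 B0'])
      fix x assume "x \<in> closed_segment p3 p4"
      then obtain u where u: "0 \<le> u" "u \<le> 1" "x = (1 - u) *\<^sub>R p3 + u *\<^sub>R p4"
        unfolding closed_segment_def by auto
      have "x = Complex ((1-u)*a + u*c) T" using u by (simp add: p3_def p4_def complex_eq_iff algebra_simps)
      moreover have "c \<le> (1-u)*a + u*c" "(1-u)*a + u*c \<le> a" using u ca
        using mult_nonneg_nonneg[of "a-c" u] mult_nonneg_nonneg[of "a-c" "1-u"] by (auto simp: algebra_simps)
      ultimately show "norm (h x) \<le> B T" using Bb[OF T(1)] by auto
    qed
    have np: "norm (p2 - p1) = a - c" "norm (p4 - p3) = a - c"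
      using ca by (auto simp: p1_def p2_def p3_def p4_def cmod_def)
    have "Ia T - Ic T = -\<i> * (J23 - J14)" by (simp add: IaJ IcJ algebra_simps)
    also have "J23 - J14 = - (J12 + J34)" using sum0 by (simp add: algebra_simps)
    finally have "norm (Ia T - Ic T) = norm (J12 + J34)"
      by (simp add: norm_mult norm_minus_commute flip: minus_add_distrib)
    also have "\<dots> \<le> norm J12 + norm J34" by (rule norm_triangle_ineq)
    finally show ?thesis using n12 n34 np by (simp add: algebra_simps)
  qed
  have conv: "((\<lambda>T. LINT \<phi>:{-T..T}|lborel. h (Complex s \<phi>)) \<longlongrightarrow> (LBINT \<phi>. h (Complex s \<phi>))) at_top"
    if int: "integrable lborel (\<lambda>\<phi>. h (Complex s \<phi>))" for s
    unfolding set_lebesgue_integral_def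
  proof (rule integral_dominated_convergence_at_top[where w="\<lambda>\<phi>. norm (h (Complex s \<phi>))"])
    show "(\<lambda>\<phi>. h (Complex s \<phi>)) \<in> borel_measurable lborel" using int by auto
    show "(\<lambda>\<phi>. indicator {-T..T} \<phi> *\<^sub>R h (Complex s \<phi>)) \<in> borel_measurable lborel" for T
      using integrable_mult_indicator[OF _ int, of "{-T..T}"] by auto
    show "integrable lborel (\<lambda>\<phi>. norm (h (Complex s \<phi>)))" using int by auto
    show "AE x in lborel. ((\<lambda>T. indicator {-T..T} x *\<^sub>R h (Complex s x)) \<longlongrightarrow> h (Complex s x)) at_top"
    proof (intro AE_I2 tendsto_eventually)
      fix x :: real
      show "\<forall>\<^sub>F T in at_top. indicator {-T..T} x *\<^sub>R h (Complex s x) = h (Complex s x)"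
        using eventually_ge_at_top[of "\<bar>x\<bar>"] by eventually_elim (auto simp: indicator_def)
    qed
    show "\<forall>\<^sub>F T in at_top. AE x in lborel. norm (indicator {-T..T} x *\<^sub>R h (Complex s x)) \<le> norm (h (Complex s x))"
      by (intro always_eventually allI AE_I2) (auto simp: indicator_def)
  qed
  have "((\<lambda>T. Ia T - Ic T) \<longlongrightarrow> (LBINT \<phi>. h (Complex a \<phi>)) - (LBINT \<phi>. h (Complex c \<phi>))) at_top"
    unfolding Ia_def Ic_def by (intro tendsto_diff conv ia ic)
  moreover have "((\<lambda>T. Ia T - Ic T) \<longlongrightarrow> 0) at_top"
  proof (rule Lim_null_comparison)
    show "\<forall>\<^sub>F T in at_top. norm (Ia T - Ic T) \<le> 2 * (a - c) * B T"
      using eventually_ge_at_top[of "max Tz 1"] by eventually_elim (rule key; auto)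
    show "((\<lambda>T. 2 * (a - c) * B T) \<longlongrightarrow> 0) at_top"
      using tendsto_mult_left[OF B0, of "2*(a-c)"] by simp
  qed
  ultimately have "(LBINT \<phi>. h (Complex a \<phi>)) - (LBINT \<phi>. h (Complex c \<phi>)) = 0"
    by (rule tendsto_unique[rotated]) simp
  then show ?thesis by simp
qed


lemma ratio_bound:
  fixes z a b :: complex
  assumes "norm (z - b) \<ge> 1"
  shows "norm ((z + a) / (z - b)) \<le> 1 + norm a + norm b"
proof -
  have pos: "norm (z - b) > 0" using assms by linarith
  have "norm (z + a) \<le> norm (z - b) + norm a + norm b"
    using norm_triangle_ineq[of "z - b" "a + b"] norm_triangle_ineq[of a b] by (simp add: algebra_simps)
  also have "\<dots> \<le> norm (z - b) * (1 + norm a + norm b)"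
    using assms mult_left_mono[of 1 "norm (z-b)" "norm a + norm b"] by (simp add: algebra_simps)
  finally show ?thesis using pos by (simp add: norm_divide divide_le_eq mult.commute)
qed

lemma prod_bound:
  fixes z :: complex
  assumes "\<And>j. j \<in> {1..m} \<Longrightarrow> norm (z - bb j) \<ge> 1"
  shows "norm (\<Prod>j=1..m. (z + aa j) / (z - bb j)) \<le> (\<Prod>j=1..m. 1 + norm (aa j) + norm (bb j))"
  unfolding prod_norm[symmetric]
  by (intro prod_mono conjI ratio_bound assms) auto

lemma exp_gauss_eq:
  fixes t \<phi> :: real assumes "t > 0"
  shows "exp (- (\<phi>\<^sup>2 * t / 2)) = sqrt (2 * pi / t) * normal_density 0 (1 / sqrt t) \<phi>"
  using assms by (simp add: normal_density_def power_divide real_sqrt_divide field_simps)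

lemma Gbound:
  fixes a t w :: real and m :: nat and aa bb :: "nat \<Rightarrow> complex"
  assumes t: "t > 0" and w: "w > 0" and bb: "\<forall>j\<in>{1..m}. Re (bb j) > a"
  defines "c \<equiv> - (w / t + (\<bar>a\<bar> + 1))"
  shows "norm (Gamma_integral a (\<lambda>z. exp (z\<^sup>2 * of_real t / 2) * exp (z * of_real w) *
            (\<Prod>j=1..m. (z + aa j) / (z - bb j))))
         \<le> (\<Prod>j=1..m. 1 + norm (aa j) + norm (bb j)) * exp (c\<^sup>2 * t / 2 + c * w) * sqrt (2 * pi / t) / (2 * pi)"
proof -
  define g where "g z = exp (z\<^sup>2 * of_real t / 2) * exp (z * of_real w) *
            (\<Prod>j=1..m. (z + aa j) / (z - bb j))" for z
  define PP where "PP = (\<Prod>j=1..m. 1 + norm (aa j) + norm (bb j))"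
  define K where "K = PP * exp (c\<^sup>2 * t / 2 + c * w)"
  have PP0: "PP \<ge> 0" unfolding PP_def by (intro prod_nonneg) (auto intro: add_nonneg_nonneg)
  have K0: "K \<ge> 0" unfolding K_def using PP0 by simp
  have ca: "c \<le> a - 1" unfolding c_def using t w by (smt (verit) divide_pos_pos)
  have GI: "Gamma_integral a g = (LBINT \<phi>. g (Complex a \<phi>)) / (2 * pi)"
    unfolding Gamma_integral_def by (simp add: field_simps)
  have normg: "norm (g z) = exp ((Re z ^ 2 - Im z ^ 2) * t / 2 + Re z * w) * norm (\<Prod>j=1..m. (z + aa j) / (z - bb j))" for z
    unfolding g_def norm_mult norm_exp_eq_Re by (simp add: power2_eq_square exp_add algebra_simps)
  define \<delta> where "\<delta> = Min (insert (a + 1) (Re ` bb ` {1..m}))"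
  have a\<delta>: "a < \<delta>" unfolding \<delta>_def using bb by (auto simp: Min_gr_iff)
  have \<delta>b: "\<delta> \<le> Re (bb j)" if "j \<in> {1..m}" for j unfolding \<delta>_def using that by (intro Min_le) auto
  have nz: "z - bb j \<noteq> 0" if "Re z < \<delta>" "j \<in> {1..m}" for z j
    using \<delta>b[OF that(2)] that(1) by auto
  have hol: "g holomorphic_on {z. Re z < \<delta>}"
    unfolding g_def using nz by (intro holomorphic_intros) auto
  have cont: "continuous_on UNIV (\<lambda>\<phi>. g (Complex s \<phi>))" if "s < \<delta>" for s
  proof -
    have "continuous_on UNIV (\<lambda>\<phi>::real. Complex s \<phi>)"
      unfolding Complex_eq by (intro continuous_intros)
    moreover have "continuous_on {z. Re z < \<delta>} g" using hol by (rule holomorphic_on_imp_continuous_on)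
    moreover have "range (Complex s) \<subseteq> {z. Re z < \<delta>}" using that by auto
    ultimately show ?thesis
      using continuous_on_compose2[of "{z. Re z < \<delta>}" g UNIV "Complex s"] by blast
  qed
  have lineC: "norm (g (Complex c \<phi>)) \<le> K * sqrt (2 * pi / t) * normal_density 0 (1 / sqrt t) \<phi>" for \<phi>
  proof -
    have "norm (\<Prod>j=1..m. (Complex c \<phi> + aa j) / (Complex c \<phi> - bb j)) \<le> PP"
      unfolding PP_def
    proof (rule prod_bound)
      fix j assume "j \<in> {1..m}"
      then have "Re (bb j) > a" using bb by auto
      then have "1 \<le> \<bar>Re (Complex c \<phi> - bb j)\<bar>" using ca by simp
      also have "\<dots> \<le> norm (Complex c \<phi> - bb j)" by (rule abs_Re_le_cmod)
      finally show "1 \<le> norm (Complex c \<phi> - bb j)" .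
    qed
    then have "norm (g (Complex c \<phi>)) \<le> exp ((c ^ 2 - \<phi> ^ 2) * t / 2 + c * w) * PP"
      unfolding normg by (simp add: mult_left_mono)
    also have "exp ((c ^ 2 - \<phi> ^ 2) * t / 2 + c * w) = exp (c\<^sup>2 * t / 2 + c * w) * exp (- (\<phi>\<^sup>2 * t / 2))"
      by (simp add: exp_add[symmetric] field_simps)
    also have "exp (- (\<phi>\<^sup>2 * t / 2)) = sqrt (2 * pi / t) * normal_density 0 (1 / sqrt t) \<phi>"
      using t by (rule exp_gauss_eq)
    finally show ?thesis by (simp add: K_def mult_ac)
  qed
  have intD: "integrable lborel (\<lambda>\<phi>. K * sqrt (2 * pi / t) * normal_density 0 (1 / sqrt t) \<phi>)"
    using t by (intro integrable_mult_right integrable_normal_density) auto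
  have c\<delta>: "c < \<delta>" using ca a\<delta> by simp
  have ic: "integrable lborel (\<lambda>\<phi>. g (Complex c \<phi>))"
  proof (rule Bochner_Integration.integrable_bound[OF intD])
    show "(\<lambda>\<phi>. g (Complex c \<phi>)) \<in> borel_measurable lborel"
      using borel_measurable_continuous_onI[OF cont[OF c\<delta>]] by simp
    show "AE x in lborel. norm (g (Complex c x)) \<le> norm (K * sqrt (2 * pi / t) * normal_density 0 (1 / sqrt t) x)"
      using lineC by (intro AE_I2) (smt (verit) real_norm_def)
  qed
  have boundC: "norm (LBINT \<phi>. g (Complex c \<phi>)) \<le> K * sqrt (2 * pi / t)"
  proof -
    have "norm (LBINT \<phi>. g (Complex c \<phi>)) \<le> (LBINT \<phi>. norm (g (Complex c \<phi>)))"
      by (rule integral_norm_bound)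
    also have "\<dots> \<le> (LBINT \<phi>. K * sqrt (2 * pi / t) * normal_density 0 (1 / sqrt t) \<phi>)"
      by (intro integral_mono integrable_norm ic intD lineC)
    also have "\<dots> = K * sqrt (2 * pi / t)" using t integral_normal_density[where \<sigma>="1/sqrt t" and \<mu>=0] by simp
    finally show ?thesis .
  qed
  have main: "norm (Gamma_integral a g) \<le> K * sqrt (2 * pi / t) / (2 * pi)"
  proof (cases "integrable lborel (\<lambda>\<phi>. g (Complex a \<phi>))")
    case False
    then have "Gamma_integral a g = 0" unfolding GI by (simp add: not_integrable_integral_eq)
    then show ?thesis using K0 t by simp
  next
    case True
    define X where "X = \<bar>a\<bar> + \<bar>c\<bar>"
    define T0 where "T0 = 1 + (\<Sum>j=1..m. norm (bb j))"
    define B where "B T = PP * exp (X\<^sup>2 * t / 2 + X * w) * exp (- (T\<^sup>2 * t / 2))" for T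
    have "(LBINT \<phi>. g (Complex a \<phi>)) = (LBINT \<phi>. g (Complex c \<phi>))"
    proof (rule contour_shift[OF _ a\<delta> hol True ic, where B=B and Tz=T0])
      show "c < a" using ca by simp
      show "(B \<longlongrightarrow> 0) at_top" unfolding B_def using t by real_asymp
      fix T x assume T: "T0 \<le> T" and x: "c \<le> x" "x \<le> a"
      have xX: "\<bar>x\<bar> \<le> X" unfolding X_def using x by linarith
      have x2: "x ^ 2 \<le> X ^ 2" using power_mono[OF xX abs_ge_zero, of 2] by simp
      have x2t: "x ^ 2 * t \<le> X ^ 2 * t" using x2 t by (intro mult_right_mono) auto
      have xw: "x * w \<le> X * w" using xX w by (intro mult_right_mono) auto
      have sb: "norm (bb j) \<le> (\<Sum>j=1..m. norm (bb j))" if "j \<in> {1..m}" for j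
        using that by (intro member_le_sum) auto
      have key: "norm (g (Complex x s)) \<le> B T" if s: "\<bar>s\<bar> = T" for s
      proof -
        have "norm (\<Prod>j=1..m. (Complex x s + aa j) / (Complex x s - bb j)) \<le> PP"
          unfolding PP_def
        proof (rule prod_bound)
          fix j assume j: "j \<in> {1..m}"
          have "1 \<le> \<bar>Im (Complex x s - bb j)\<bar>"
            using sb[OF j] abs_Im_le_cmod[of "bb j"] s T unfolding T0_def by simp
          also have "\<dots> \<le> norm (Complex x s - bb j)" by (rule abs_Im_le_cmod)
          finally show "1 \<le> norm (Complex x s - bb j)" .
        qed
        then have "norm (g (Complex x s)) \<le> exp ((x ^ 2 - s ^ 2) * t / 2 + x * w) * PP"
          unfolding normg by (simp add: mult_left_mono)
        moreover have "exp ((x ^ 2 - s ^ 2) * t / 2 + x * w) \<le> exp (X\<^sup>2 * t / 2 + X * w) * exp (- (T\<^sup>2 * t / 2))"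
        proof -
          have s2: "s ^ 2 = T ^ 2" using s by (metis power2_abs)
          have e1: "(x ^ 2 - s ^ 2) * t / 2 = x ^ 2 * t / 2 - T ^ 2 * t / 2"
            unfolding s2 by (simp add: algebra_simps diff_divide_distrib)
          have "(x ^ 2 - s ^ 2) * t / 2 + x * w \<le> X\<^sup>2 * t / 2 + X * w + - (T\<^sup>2 * t / 2)"
            unfolding e1 using x2t xw by linarith
          then show ?thesis unfolding exp_add[symmetric] by simp
        qed
        ultimately have "norm (g (Complex x s)) \<le> (exp (X\<^sup>2 * t / 2 + X * w) * exp (- (T\<^sup>2 * t / 2))) * PP"
          using mult_right_mono[OF _ PP0] by (meson order_trans)
        then show ?thesis unfolding B_def by (simp add: mult_ac)
      qed
      have "T \<ge> 0" using T unfolding T0_def by (smt (verit) sum_nonneg norm_ge_zero)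
      then show "norm (g (Complex x T)) \<le> B T \<and> norm (g (Complex x (-T))) \<le> B T"
        using key[of T] key[of "-T"] by simp
    qed
    then show "norm (Gamma_integral a g) \<le> K * sqrt (2 * pi / t) / (2 * pi)"
      unfolding GI using boundC by (simp add: norm_divide divide_right_mono)
  qed
  then show ?thesis unfolding K_def PP_def g_def[abs_def] .
qed


lemma gg_le:
  fixes \<epsilon> t :: real assumes e: "\<epsilon> > 0" and t: "t > 0"
  shows "exp (- (\<epsilon>\<^sup>2 / (2 * t))) / sqrt (2 * pi * t) \<le> 1 / \<epsilon>"
proof -
  define u where "u = \<epsilon>\<^sup>2 / (2 * t)"
  have u0: "u > 0" unfolding u_def using e t by simp
  have eps2: "\<epsilon>\<^sup>2 = 2 * t * u" unfolding u_def using t by simp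
  have "u \<le> exp (2 * u)" using exp_ge_add_one_self[of "2 * u"] u0 by linarith
  then have "u * exp (- (2 * u)) \<le> exp (2 * u) * exp (- (2 * u))"
    by (intro mult_right_mono) auto
  also have "exp (2 * u) * exp (- (2 * u)) = 1" by (simp flip: exp_add)
  finally have ue: "u * exp (- (2 * u)) \<le> 1" .
  have ex: "exp (- u) * exp (- u) = exp (- (2 * u))"
    by (simp flip: exp_add)
  have "(\<epsilon> * exp (- u))\<^sup>2 = \<epsilon>\<^sup>2 * (exp (- u) * exp (- u))"
    by (simp add: power2_eq_square)
  also have "\<dots> = 2 * t * (u * exp (- (2 * u)))" unfolding eps2 ex by simp
  also have "\<dots> \<le> 2 * t * 1" using ue t by (intro mult_left_mono) auto
  also have "\<dots> \<le> 2 * pi * t" using t pi_ge_two by simp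
  finally have "\<epsilon> * exp (- u) \<le> sqrt (2 * pi * t)" by (rule real_le_rsqrt)
  moreover have "sqrt (2 * pi * t) > 0" using t by simp
  ultimately have "exp (- u) / sqrt (2 * pi * t) \<le> 1 / \<epsilon>"
    using e by (simp add: divide_le_eq le_divide_eq mult.commute)
  then show ?thesis unfolding u_def .
qed

lemma gg_lim:
  fixes \<epsilon> :: real assumes e: "\<epsilon> > 0"
  shows "((\<lambda>t. exp (- (\<epsilon>\<^sup>2 / (2 * t))) / sqrt (2 * pi * t)) \<longlongrightarrow> 0) (at_right 0)"
  using e by real_asymp

lemma expo_bound:
  fixes a t w \<epsilon> :: real
  assumes t: "0 < t" "t \<le> 1" and w: "\<epsilon> \<le> w" and e: "0 < \<epsilon>"
  defines "c \<equiv> - (w / t + (\<bar>a\<bar> + 1))"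
  shows "exp (c\<^sup>2 * t / 2 + c * w) * sqrt (2 * pi / t) / (2 * pi)
     \<le> exp ((\<bar>a\<bar> + 1)\<^sup>2 / 2) * (exp (- (\<epsilon>\<^sup>2 / (2 * t))) / sqrt (2 * pi * t))"
proof -
  define A where "A = \<bar>a\<bar> + 1"
  have ce: "c\<^sup>2 * t / 2 + c * w = A\<^sup>2 * t / 2 + - (w\<^sup>2 / (2 * t))"
    unfolding c_def A_def[symmetric] using t by (simp add: power2_eq_square field_simps)
  have "A\<^sup>2 * t \<le> A\<^sup>2 * 1" using t by (intro mult_left_mono) auto
  then have "A\<^sup>2 * t / 2 \<le> A\<^sup>2 / 2" by simp
  moreover have "\<epsilon>\<^sup>2 / (2 * t) \<le> w\<^sup>2 / (2 * t)"
    using t w e by (intro divide_right_mono power_mono) auto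
  ultimately have e1: "exp (c\<^sup>2 * t / 2 + c * w) \<le> exp (A\<^sup>2 / 2) * exp (- (\<epsilon>\<^sup>2 / (2 * t)))"
    unfolding ce exp_add[symmetric] by simp
  have e2: "sqrt (2 * pi / t) / (2 * pi) = 1 / sqrt (2 * pi * t)"
  proof -
    have s: "sqrt (2 * pi) * sqrt (2 * pi) = 2 * pi" by simp
    have "sqrt (2 * pi / t) / (2 * pi) = sqrt (2 * pi) / (sqrt t * (sqrt (2 * pi) * sqrt (2 * pi)))"
      unfolding s by (simp add: real_sqrt_divide)
    also have "\<dots> = 1 / (sqrt (2 * pi) * sqrt t)" using t by (simp add: field_simps)
    also have "\<dots> = 1 / sqrt (2 * pi * t)" by (simp add: real_sqrt_mult)
    finally show ?thesis .
  qed
  have "exp (c\<^sup>2 * t / 2 + c * w) * sqrt (2 * pi / t) / (2 * pi)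
      = exp (c\<^sup>2 * t / 2 + c * w) * (sqrt (2 * pi / t) / (2 * pi))" by simp
  also have "\<dots> = exp (c\<^sup>2 * t / 2 + c * w) * (1 / sqrt (2 * pi * t))" unfolding e2 ..
  also have "\<dots> \<le> (exp (A\<^sup>2 / 2) * exp (- (\<epsilon>\<^sup>2 / (2 * t)))) * (1 / sqrt (2 * pi * t))"
    using e1 t by (intro mult_right_mono) auto
  also have "\<dots> = exp (A\<^sup>2 / 2) * (exp (- (\<epsilon>\<^sup>2 / (2 * t))) / sqrt (2 * pi * t))" by (simp only: mult.assoc times_divide_eq_right mult_1_right)
  finally show ?thesis unfolding A_def .
qed

theorem lemmaD16:
  fixes a \<epsilon> :: real and m :: nat and f :: "real \<Rightarrow> real"
  assumes "\<epsilon> > 0" and "m \<ge> 1"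
    and "smooth_real f" and "compact (supp_real f)" and "supp_real f \<subseteq> {\<epsilon>..}"
  shows "\<exists>c. \<forall>aa bb :: nat \<Rightarrow> complex. (\<forall>j\<in>{1..m}. Re (bb j) > a) \<longrightarrow>
           (\<forall>t. 0 < t \<and> t \<le> 1 \<longrightarrow>
              norm (I_fun f \<epsilon> a m aa bb t) \<le> c * (\<Prod>j=1..m. 1 + norm (aa j) + norm (bb j)))
           \<and> ((I_fun f \<epsilon> a m aa bb) \<longlongrightarrow> 0) (at_right 0)"
proof -
  note e = assms(1)
  have cont: "continuous_on UNIV f"
    using assms(3) unfolding smooth_real_def
    by (metis differentiable_imp_continuous_on funpow_0)
  define Sp where "Sp = supp_real f"
  have "compact (f ` Sp)" unfolding Sp_def
    using assms(4) cont by (intro compact_continuous_image) (auto intro: continuous_on_subset)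
  then have "bounded (f ` Sp)" by (rule compact_imp_bounded)
  then obtain M where M0: "\<forall>y\<in>f ` Sp. \<bar>y\<bar> \<le> M" unfolding bounded_real by blast
  have M: "\<bar>f x\<bar> \<le> M" if "x \<in> Sp" for x using M0 that by blast
  have "bounded Sp" unfolding Sp_def using assms(4) by (rule compact_imp_bounded)
  then obtain R where R0: "\<forall>x\<in>Sp. \<bar>x\<bar> \<le> R" unfolding bounded_real by blast
  have R: "\<bar>x\<bar> \<le> R" if "x \<in> Sp" for x using R0 that by blast
  have inSp: "x \<in> Sp" if "f x \<noteq> 0" for x
    unfolding Sp_def supp_real_def using closure_subset[of "{x. f x \<noteq> 0}"] that by blast
  have Sp_ge: "x \<in> Sp \<Longrightarrow> \<epsilon> \<le> x" for x using assms(5) unfolding Sp_def by auto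
  define M0 where "M0 = max M 0"
  define R0 where "R0 = max R \<epsilon>"
  have fbound: "\<bar>f x\<bar> \<le> M0" for x
    using M[of x] inSp[of x] unfolding M0_def by (cases "f x = 0") auto
  have fzero: "f x = 0" if "x < \<epsilon> \<or> x > R0" for x
  proof (rule ccontr)
    assume "f x \<noteq> 0"
    then have "x \<in> Sp" by (rule inSp)
    then have "\<epsilon> \<le> x" "\<bar>x\<bar> \<le> R" using Sp_ge R by blast+
    then show False using that unfolding R0_def by auto
  qed
  define E where "E = exp ((\<bar>a\<bar> + 1)\<^sup>2 / 2)"
  define gg where "gg t = exp (- (\<epsilon>\<^sup>2 / (2 * t))) / sqrt (2 * pi * t)" for t
  define K where "K = M0 * E * (R0 - \<epsilon>)"
  have K0: "K \<ge> 0" unfolding K_def M0_def E_def R0_def by simp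
  have gg0: "gg t \<ge> 0" if "t > 0" for t unfolding gg_def using that by simp
  have Ib: "norm (I_fun f \<epsilon> a m aa bb t) \<le> K * (\<Prod>j=1..m. 1 + norm (aa j) + norm (bb j)) * gg t"
    if bb: "\<forall>j\<in>{1..m}. Re (bb j) > a" and t: "0 < t" "t \<le> 1" for aa bb t
  proof -
    define PP where "PP = (\<Prod>j=1..m. 1 + norm (aa j) + norm (bb j))"
    have PP0: "PP \<ge> 0" unfolding PP_def by (intro prod_nonneg) (auto intro: add_nonneg_nonneg)
    define G where "G w = Gamma_integral a (\<lambda>z. exp (z\<^sup>2 * of_real t / 2) * exp (z * of_real w) *
            (\<Prod>j=1..m. (z + aa j) / (z - bb j)))" for w
    have Gb: "norm (G w) \<le> PP * E * gg t" if w: "\<epsilon> \<le> w" for w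
    proof -
      have "norm (G w) \<le> PP * exp ((- (w / t + (\<bar>a\<bar> + 1)))\<^sup>2 * t / 2 + (- (w / t + (\<bar>a\<bar> + 1))) * w)
              * sqrt (2 * pi / t) / (2 * pi)"
        unfolding G_def PP_def using Gbound[OF t(1) _ bb, of w aa] w e by simp
      also have "\<dots> = PP * (exp ((- (w / t + (\<bar>a\<bar> + 1)))\<^sup>2 * t / 2 + (- (w / t + (\<bar>a\<bar> + 1))) * w)
              * sqrt (2 * pi / t) / (2 * pi))" by simp
      also have "\<dots> \<le> PP * (E * gg t)"
        unfolding E_def gg_def using expo_bound[OF t w e, of a] PP0 by (intro mult_left_mono) auto
      finally show ?thesis by (simp add: mult_ac)
    qed
    define C where "C = M0 * (PP * E * gg t)"
    have C0: "C \<ge> 0" unfolding C_def M0_def E_def using PP0 gg0[OF t(1)] by simp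
    have pw: "norm (indicator {\<epsilon>..} w *\<^sub>R (complex_of_real (f w) * G w)) \<le> C * indicator {\<epsilon>..R0} w" for w
    proof (cases "\<epsilon> \<le> w \<and> f w \<noteq> 0")
      case True
      then have "w \<le> R0" using fzero by force
      then have "norm (indicator {\<epsilon>..} w *\<^sub>R (complex_of_real (f w) * G w)) = \<bar>f w\<bar> * norm (G w)"
        using True by (simp add: norm_mult)
      also have "\<dots> \<le> M0 * (PP * E * gg t)"
        using fbound Gb True by (intro mult_mono) (auto simp: M0_def)
      finally show ?thesis using True \<open>w \<le> R0\<close> by (simp add: C_def)
    next
      case False
      then have "norm (indicator {\<epsilon>..} w *\<^sub>R (complex_of_real (f w) * G w)) = 0" by (auto simp: indicator_def)
      moreover have "C * indicator {\<epsilon>..R0} w \<ge> 0" using C0 by simp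
      ultimately show ?thesis by linarith
    qed
    have intC: "integrable lborel (\<lambda>w. C * indicator {\<epsilon>..R0} w)"
      by (intro integrable_mult_right integrable_real_indicator) (auto simp: emeasure_lborel_Icc_eq)
    have "norm (I_fun f \<epsilon> a m aa bb t) \<le> C * (R0 - \<epsilon>)"
    proof (cases "integrable lborel (\<lambda>w. indicator {\<epsilon>..} w *\<^sub>R (complex_of_real (f w) * G w))")
      case True
      have "norm (I_fun f \<epsilon> a m aa bb t) = norm (LBINT w. indicator {\<epsilon>..} w *\<^sub>R (complex_of_real (f w) * G w))"
        unfolding I_fun_def G_def set_lebesgue_integral_def ..
      also have "\<dots> \<le> (LBINT w. norm (indicator {\<epsilon>..} w *\<^sub>R (complex_of_real (f w) * G w)))"
        by (rule integral_norm_bound)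
      also have "\<dots> \<le> (LBINT w. C * indicator {\<epsilon>..R0} w)"
        by (intro integral_mono integrable_norm True intC pw)
      also have "\<dots> = C * (R0 - \<epsilon>)" unfolding R0_def by simp
      finally show ?thesis .
    next
      case False
      have "I_fun f \<epsilon> a m aa bb t = (LBINT w. indicator {\<epsilon>..} w *\<^sub>R (complex_of_real (f w) * G w))"
        unfolding I_fun_def G_def set_lebesgue_integral_def ..
      also have "\<dots> = 0" using False by (rule not_integrable_integral_eq)
      finally show ?thesis using C0 unfolding R0_def by simp
    qed
    then show ?thesis unfolding C_def K_def PP_def by (simp add: mult_ac)
  qed
  show ?thesis
  proof (intro exI[of _ "K / \<epsilon>"] allI impI conjI)
    fix aa bb :: "nat \<Rightarrow> complex" and t :: real
    assume bb: "\<forall>j\<in>{1..m}. Re (bb j) > a" and t: "0 < t \<and> t \<le> 1"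
    define PP where "PP = (\<Prod>j=1..m. 1 + norm (aa j) + norm (bb j))"
    have PP0: "PP \<ge> 0" unfolding PP_def by (intro prod_nonneg) (auto intro: add_nonneg_nonneg)
    have "norm (I_fun f \<epsilon> a m aa bb t) \<le> K * PP * gg t" using Ib[OF bb] t unfolding PP_def by auto
    also have "\<dots> \<le> K * PP * (1 / \<epsilon>)"
      using gg_le[OF e, of t] t K0 PP0 unfolding gg_def by (intro mult_left_mono) auto
    finally show "norm (I_fun f \<epsilon> a m aa bb t) \<le> K / \<epsilon> * PP" by simp
  next
    fix aa bb :: "nat \<Rightarrow> complex"
    assume bb: "\<forall>j\<in>{1..m}. Re (bb j) > a"
    define PP where "PP = (\<Prod>j=1..m. 1 + norm (aa j) + norm (bb j))"
    show "((I_fun f \<epsilon> a m aa bb) \<longlongrightarrow> 0) (at_right 0)"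
    proof (rule Lim_null_comparison)
      show "\<forall>\<^sub>F t in at_right 0. norm (I_fun f \<epsilon> a m aa bb t) \<le> K * PP * gg t"
        by (rule eventually_at_rightI[of 0 1]) (use Ib[OF bb] in \<open>auto simp: PP_def\<close>)
      have "((\<lambda>t. K * PP * gg t) \<longlongrightarrow> K * PP * 0) (at_right 0)"
        unfolding gg_def by (intro tendsto_mult tendsto_const gg_lim e)
      then show "((\<lambda>t. K * PP * gg t) \<longlongrightarrow> 0) (at_right 0)" by simp
    qed
  qed
qed

end
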